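(* Let $0<q<1$ and let $s_1,\dots,s_n$ be positive integers with $s_j>1$ for some $j$. Then \[ T[s_1,\dots,s_n]-T[s_2,\dots,s_n,s_1] = \zeta[s_1+1,s_2,\dots,s_n] - \sum_{k=0}^{s_1-2}\zeta[s_1-k,s_2,\dots,s_n,k+1], \] where the sum on the right is zero if $s_1=1$.
   Context: Fix $0<q<1$ and $[x]_q := (1-q^x)/(1-q)$. For positive integers $t_1,\dots,t_N$ with $t_1>1$, $\zeta[t_1,\dots,t_N] := \sum_{k_1>\cdots>k_N>0}\prod_{j=1}^N q^{(t_j-1)k_j}/[k_j]_q^{t_j}$. For positive integers $s_1,\dots,s_n$ define \[ T[s_1,\dots,s_n] := \sum_{k_1>\cdots>k_n>k_{n+1}\ge 0}\frac{q^{k_1-k_{n+1}}}{[k_1-k_{n+1}]_q}\prod_{j=1}^n\frac{q^{(s_j-1)k_j}}{[k_j]_q^{s_j}} \] (sum over integers satisfying the indicated inequalities); it is finite when some $s_j>1$. *)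

theory Defs
  imports "HOL-Analysis.Analysis"
begin

definition qint :: "real \<Rightarrow> nat \<Rightarrow> real" where
  "qint q x = (1 - q ^ x) / (1 - q)"

definition qzeta :: "real \<Rightarrow> nat list \<Rightarrow> real" where
  "qzeta q t = (\<Sum>\<^sub>\<infinity> ks \<in> {ks. length ks = length t \<and> sorted_wrt (>) ks \<and> (\<forall>k\<in>set ks. 0 < k)}.
      \<Prod>j<length t. q ^ ((t ! j - 1) * (ks ! j)) / qint q (ks ! j) ^ (t ! j))"

definition qT :: "real \<Rightarrow> nat list \<Rightarrow> real" where
  "qT q s = (\<Sum>\<^sub>\<infinity> ks \<in> {ks. length ks = length s + 1 \<and> sorted_wrt (>) ks}.
      q ^ (hd ks - last ks) / qint q (hd ks - last ks) *
      (\<Prod>j<length s. q ^ ((s ! j - 1) * (ks ! j)) / qint q (ks ! j) ^ (s ! j)))"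

end

theory Submission
  imports Defs
begin

lemma infsum_conv_nn:
  fixes f :: "'a \<Rightarrow> real"
  assumes nn: "\<And>x. x \<in> A \<Longrightarrow> 0 \<le> f x"
  shows "infsum f A = enn2real (\<integral>\<^sup>+x. ennreal (f x) \<partial>count_space A)"
proof (cases "(\<integral>\<^sup>+x. ennreal (f x) \<partial>count_space A) = \<infinity>")
  case True
  have "\<not> f summable_on A"
  proof
    assume "f summable_on A"
    then have "(\<lambda>x. norm (f x)) summable_on A"
      using nn summable_on_cong[of A "\<lambda>x. norm (f x)" f] by (metis real_norm_def abs_of_nonneg)
    then have "integrable (count_space A) f" using abs_summable_equivalent
      unfolding Infinite_Set_Sum.abs_summable_on_def by blast
    then have "(\<integral>\<^sup>+x. ennreal (f x) \<partial>count_space A) = ennreal (infsetsum f A)"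
      using nn by (rule nn_integral_conv_infsetsum[unfolded Infinite_Set_Sum.abs_summable_on_def])
    with True show False by simp
  qed
  then show ?thesis using True by (simp add: infsum_not_exists)
next
  case False
  have "integrable (count_space A) f"
    apply (rule integrableI_nn_integral_finite[where x="enn2real (\<integral>\<^sup>+x. ennreal (f x) \<partial>count_space A)"])
    using False nn by (simp_all add: AE_count_space ennreal_enn2real_if)
  then have "infsetsum f A = infsum f A" by (rule infsetsum_infsum[unfolded Infinite_Set_Sum.abs_summable_on_def])
  moreover have "infsetsum f A = enn2real (\<integral>\<^sup>+x. ennreal (f x) \<partial>count_space A)"
    using False nn by (intro infsetsum_conv_nn_integral) auto
  ultimately show ?thesis by simp
qed
lemma nn_Sigma:
  fixes h :: "'a::countable \<times> 'b::countable \<Rightarrow> ennreal"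
  shows "(\<integral>\<^sup>+z. h z \<partial>count_space (Sigma A B)) = (\<integral>\<^sup>+x. \<integral>\<^sup>+y. h (x,y) \<partial>count_space (B x) \<partial>count_space A)"
proof -
  have inner: "(\<integral>\<^sup>+y. h (x,y) \<partial>count_space (B x)) =
       (\<integral>\<^sup>+z. h z * indicator {z. fst z = x} z \<partial>count_space (Sigma A B))" if "x \<in> A" for x
  proof -
    have "(\<integral>\<^sup>+z. h z * indicator {z. fst z = x} z \<partial>count_space (Sigma A B))
        = (\<integral>\<^sup>+z. h z * indicator {z. fst z = x} z * indicator (Sigma A B) z \<partial>count_space UNIV)"
      by (subst nn_integral_count_space_indicator) simp_all
    also have "\<dots> = (\<integral>\<^sup>+z. h z * indicator {z\<in>Sigma A B. fst z = x} z \<partial>count_space UNIV)"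
      by (intro nn_integral_cong) (simp split: split_indicator)
    also have "\<dots> = (\<integral>\<^sup>+z. h z \<partial>count_space {z\<in>Sigma A B. fst z = x})"
      by (subst (2) nn_integral_count_space_indicator) simp_all
    also have "\<dots> = (\<integral>\<^sup>+y. h (x,y) \<partial>count_space (B x))"
    proof -
      have "bij_betw (Pair x) (B x) {z\<in>Sigma A B. fst z = x}"
        by (rule bij_betw_byWitness[where f'=snd]) (use that in auto)
      then show ?thesis by (rule nn_integral_bij_count_space[symmetric])
    qed
    finally show ?thesis by simp
  qed
  have "(\<integral>\<^sup>+x. \<integral>\<^sup>+y. h (x,y) \<partial>count_space (B x) \<partial>count_space A)
      = (\<integral>\<^sup>+x. \<integral>\<^sup>+z. h z * indicator {z. fst z = x} z \<partial>count_space (Sigma A B) \<partial>count_space A)"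
    by (intro nn_integral_cong) (simp add: inner)
  also have "\<dots> = (\<integral>\<^sup>+z. \<integral>\<^sup>+x. h z * indicator {z. fst z = x} z \<partial>count_space A \<partial>count_space (Sigma A B))"
    by (rule nn_integral_count_space_nn_integral[symmetric]) auto
  also have "\<dots> = (\<integral>\<^sup>+z. h z \<partial>count_space (Sigma A B))"
  proof (intro nn_integral_cong)
    fix z assume "z \<in> space (count_space (Sigma A B))"
    then have z: "fst z \<in> A" by (auto simp: SigmaE)
    show "(\<integral>\<^sup>+x. h z * indicator {z. fst z = x} z \<partial>count_space A) = h z"
      by (subst nn_integral_count_space'[where A="{fst z}"]) (use z in \<open>auto split: split_indicator\<close>)
  qed
  finally show ?thesis by simp
qed


lemma nn_union:
  fixes f :: "'a \<Rightarrow> ennreal"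
  assumes "A \<inter> B = {}"
  shows "(\<integral>\<^sup>+x. f x \<partial>count_space (A \<union> B)) = (\<integral>\<^sup>+x. f x \<partial>count_space A) + (\<integral>\<^sup>+x. f x \<partial>count_space B)"
proof -
  have "(\<integral>\<^sup>+x. f x \<partial>count_space (A \<union> B)) = (\<integral>\<^sup>+x. f x * indicator A x + f x * indicator B x \<partial>count_space UNIV)"
    by (subst nn_integral_count_space_indicator)
       (use assms in \<open>auto intro!: nn_integral_cong split: split_indicator\<close>)
  also have "\<dots> = (\<integral>\<^sup>+x. f x * indicator A x \<partial>count_space UNIV) + (\<integral>\<^sup>+x. f x * indicator B x \<partial>count_space UNIV)"
    by (rule nn_integral_add) auto
  also have "\<dots> = (\<integral>\<^sup>+x. f x \<partial>count_space A) + (\<integral>\<^sup>+x. f x \<partial>count_space B)"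
    by (simp add: nn_integral_count_space_indicator)
  finally show ?thesis .
qed

lemma nn_subset_le:
  fixes f :: "'a \<Rightarrow> ennreal"
  assumes "A \<subseteq> B"
  shows "(\<integral>\<^sup>+x. f x \<partial>count_space A) \<le> (\<integral>\<^sup>+x. f x \<partial>count_space B)"
proof -
  have "(\<integral>\<^sup>+x. f x \<partial>count_space A) = (\<integral>\<^sup>+x. f x * indicator A x \<partial>count_space UNIV)"
    by (simp add: nn_integral_count_space_indicator)
  also have "\<dots> \<le> (\<integral>\<^sup>+x. f x * indicator B x \<partial>count_space UNIV)"
    by (intro nn_integral_mono) (use assms in \<open>auto split: split_indicator\<close>)
  also have "\<dots> = (\<integral>\<^sup>+x. f x \<partial>count_space B)"
    by (simp add: nn_integral_count_space_indicator)
  finally show ?thesis .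
qed

lemma nn_mono_le:
  fixes f g :: "'a \<Rightarrow> ennreal"
  assumes "\<And>x. x \<in> A \<Longrightarrow> f x \<le> g x"
  shows "(\<integral>\<^sup>+x. f x \<partial>count_space A) \<le> (\<integral>\<^sup>+x. g x \<partial>count_space A)"
  by (rule nn_integral_mono) (use assms in auto)

lemma nn_geom:
  fixes r :: real
  assumes "0 \<le> r" "r < 1"
  shows "(\<integral>\<^sup>+k. ennreal (r ^ k) \<partial>count_space (UNIV::nat set)) = ennreal (1 / (1 - r))"
proof -
  have "(\<integral>\<^sup>+k. ennreal (r ^ k) \<partial>count_space (UNIV::nat set)) = (\<Sum>k. ennreal (r ^ k))"
    by (rule nn_integral_count_space_nat)
  also have "\<dots> = ennreal (1 / (1 - r))"
    by (rule suminf_ennreal_eq) (use assms in \<open>auto intro!: geometric_sums\<close>)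
  finally show ?thesis .
qed

lemma nn_geom_fin:
  fixes r :: real
  assumes "0 \<le> r" "r < 1"
  shows "(\<integral>\<^sup>+k. ennreal (r ^ k) \<partial>count_space (A::nat set)) < \<infinity>"
proof -
  have "(\<integral>\<^sup>+k. ennreal (r ^ k) \<partial>count_space A) \<le> (\<integral>\<^sup>+k. ennreal (r ^ k) \<partial>count_space (UNIV::nat set))"
    by (rule nn_subset_le) auto
  also have "\<dots> < \<infinity>" using nn_geom[OF assms] by simp
  finally show ?thesis .
qed

lemma nn_reindex:
  fixes F :: "'b \<Rightarrow> ennreal" and \<phi> :: "'a \<Rightarrow> 'b"
  assumes "\<And>a. a \<in> A \<Longrightarrow> \<psi> (\<phi> a) = a" "\<And>b. b \<in> B \<Longrightarrow> \<phi> (\<psi> b) = b"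
    "\<And>a. a \<in> A \<Longrightarrow> \<phi> a \<in> B" "\<And>b. b \<in> B \<Longrightarrow> \<psi> b \<in> A"
  shows "(\<integral>\<^sup>+x. F x \<partial>count_space B) = (\<integral>\<^sup>+a. F (\<phi> a) \<partial>count_space A)"
proof -
  have "bij_betw \<phi> A B"
    by (rule bij_betw_byWitness[where f'=\<psi>]) (use assms in auto)
  then show ?thesis by (rule nn_integral_bij_count_space[symmetric])
qed



definition fq :: "real \<Rightarrow> nat \<Rightarrow> nat \<Rightarrow> real" where
  "fq q s k = q ^ ((s - 1) * k) / qint q k ^ s"
definition gq :: "real \<Rightarrow> nat \<Rightarrow> real" where
  "gq q a = q ^ a / qint q a"
definition Pr :: "real \<Rightarrow> nat list \<Rightarrow> nat list \<Rightarrow> real" where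
  "Pr q t ks = (\<Prod>j<length t. fq q (t!j) (ks!j))"

lemma Pr_Nil[simp]: "Pr q [] ks = 1" by (simp add: Pr_def)

lemma Pr_Cons[simp]: "Pr q (a#t) (k#ks) = fq q a k * Pr q t ks"
  unfolding Pr_def by (simp only: length_Cons prod.lessThan_Suc_shift) simp

lemma Pr_append: "length ks = length t \<Longrightarrow> Pr q (t@t') (ks@ks') = Pr q t ks * Pr q t' ks'"
proof (induction t arbitrary: ks)
  case Nil then show ?case by simp
next
  case (Cons a t)
  then obtain k ks0 where "ks = k # ks0" "length ks0 = length t" by (cases ks) auto
  with Cons show ?case by simp
qed

lemma qint_pos: "0 < q \<Longrightarrow> q < 1 \<Longrightarrow> 0 < k \<Longrightarrow> 0 < qint q k"
  unfolding qint_def by (auto intro!: divide_pos_pos simp: power_less_one_iff)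

lemma qint_nonneg: "0 < q \<Longrightarrow> q < 1 \<Longrightarrow> 0 \<le> qint q k"
  unfolding qint_def by (auto intro!: divide_nonneg_pos simp: power_le_one)

lemma qint_ge1: "0 < q \<Longrightarrow> q < 1 \<Longrightarrow> 0 < k \<Longrightarrow> 1 \<le> qint q k"
proof -
  assume q: "0 < q" "q < 1" "0 < k"
  have "q ^ k \<le> q ^ 1" using q by (intro power_decreasing) auto
  then show ?thesis using q unfolding qint_def by (simp add: field_simps)
qed

lemma fq_nonneg: "0 < q \<Longrightarrow> q < 1 \<Longrightarrow> 0 \<le> fq q s k"
  unfolding fq_def using qint_nonneg by auto

lemma gq_nonneg: "0 < q \<Longrightarrow> q < 1 \<Longrightarrow> 0 \<le> gq q k"
  unfolding gq_def using qint_nonneg by auto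

lemma Pr_nonneg: "0 < q \<Longrightarrow> q < 1 \<Longrightarrow> 0 \<le> Pr q t ks"
  unfolding Pr_def using fq_nonneg by (auto intro!: prod_nonneg)

lemma fq_Suc: "fq q (Suc j) k = (1 / qint q k) * gq q k ^ j"
  unfolding fq_def gq_def power_divide by (simp add: mult.commute[of _ k] power_mult)

lemma gq_fq: assumes s: "0 < s" shows "gq q k * fq q s k = fq q (Suc s) k"
proof -
  obtain j where "s = Suc j" using s by (cases s) auto
  then show ?thesis by (simp add: fq_Suc)
qed

lemma key_alg:
  fixes x y a b G c :: real
  assumes "a = x - c" "b = y - c" "G*(y-x) = y*a"
  shows "x*a^n*G + (\<Sum>j<n. x*a^(n-j)*(y*b^j)) + y*b^n*a = y*b^n*G"
proof (induction n)
  case 0 then show ?case using assms(3) by (simp add: algebra_simps)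
next
  case (Suc n)
  have e1: "(\<Sum>j<Suc n. x*a^(Suc n-j)*(y*b^j)) = (\<Sum>j<n. x*a^(Suc n-j)*(y*b^j)) + x*a*(y*b^n)"
    by simp
  have e2: "(\<Sum>j<n. x*a^(Suc n-j)*(y*b^j)) = a * (\<Sum>j<n. x*a^(n-j)*(y*b^j))"
    unfolding sum_distrib_left by (intro sum.cong) (auto simp: Suc_diff_le)
  have s: "(\<Sum>j<Suc n. x*a^(Suc n-j)*(y*b^j)) = a * (\<Sum>j<n. x*a^(n-j)*(y*b^j)) + x*a*(y*b^n)"
    unfolding e1 e2 by (rule refl)
  have "x*a^Suc n*G + (\<Sum>j<Suc n. x*a^(Suc n-j)*(y*b^j)) + y*b^Suc n*a
      = a * (x*a^n*G + (\<Sum>j<n. x*a^(n-j)*(y*b^j))) + x*a*(y*b^n) + y*b^Suc n*a"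
    unfolding s by (simp add: algebra_simps)
  also have "\<dots> = a * (y*b^n*G - y*b^n*a) + x*a*(y*b^n) + y*b^Suc n*a"
  proof -
    have "x*a^n*G + (\<Sum>j<n. x*a^(n-j)*(y*b^j)) = y*b^n*G - y*b^n*a" using Suc by linarith
    then show ?thesis by simp
  qed
  also have "\<dots> = y*b^n * (a*G - a*a + x*a + b*a)" by (simp add: algebra_simps)
  also have "a*G - a*a + x*a + b*a = b * G"
  proof -
    have "G*(x-y) = - (y*a)" using assms(3) by (simp add: algebra_simps)
    moreover have "a*G - a*a + x*a + b*a - b*G = G*(x-y) + y*a"
      unfolding assms(1,2) by (simp add: algebra_simps)
    ultimately show ?thesis by linarith
  qed
  finally show ?case by (simp add: algebra_simps)
qed

lemma aux_frac:
  fixes A B u c v :: real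
  assumes "A \<noteq> 0" "B \<noteq> 0" "A + u * B \<noteq> 0"
  shows "v * c / B * (c / A - c / (A + u * B)) = c / A * (u * v * c / (A + u * B))"
  using assms by (simp add: field_simps)

lemma base_rel:
  assumes q: "0 < q" "q < 1" and kl: "l < k" "0 < l"
  shows "gq q (k-l) * (1/qint q l - 1/qint q k) = (1/qint q l) * gq q k"
proof -
  define u where "u = q ^ l"
  define v where "v = q ^ (k-l)"
  have qk: "q ^ k = u * v" unfolding u_def v_def using kl by (simp flip: power_add)
  have u: "0 < u" "u < 1" unfolding u_def using q kl by (auto simp: power_less_one_iff)
  have v: "0 < v" "v < 1" unfolding v_def using q kl by (auto simp: power_less_one_iff)
  have "u * v < u * 1" using u v by (intro mult_strict_left_mono) auto
  then have uv: "u * v < 1" using u by linarith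
  have nz: "1 - u \<noteq> 0" "1 - v \<noteq> 0" "1 - u * v \<noteq> 0" "1 - q \<noteq> 0" using u v uv q by auto
  have h1: "gq q (k-l) = v * (1-q)/(1-v)" unfolding gq_def qint_def v_def[symmetric] using nz by simp
  have h2: "1/qint q l = (1-q)/(1-u)" unfolding qint_def u_def[symmetric] by simp
  have h3: "1/qint q k = (1-q)/(1-u * v)" unfolding qint_def qk by simp
  have h4: "gq q k = u * v * (1-q)/(1-u * v)" unfolding gq_def qint_def qk using nz by simp
  have "v * (1-q)/(1-v) * ((1-q)/(1-u) - (1-q)/(1-u * v)) = (1-q)/(1-u) * (u * v * (1-q)/(1-u * v))"
  proof -
    have e: "(1-u) + u * (1-v) = 1 - u * v" by (simp add: algebra_simps)
    show ?thesis using aux_frac[of "1-u" "1-v" u v "1-q", unfolded e] nz by blast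
  qed
  then show ?thesis unfolding h1 h2 h3 h4 .
qed

lemma pointwise:
  assumes q: "0 < q" "q < 1" and kl: "l < k" "0 < l" and s: "0 < s"
  shows "fq q s k * gq q (k-l) + (\<Sum>j<s-1. fq q (s-j) k * fq q (j+1) l) + fq q s l * gq q k
        = fq q s l * gq q (k-l)"
proof -
  obtain n where n: "s = Suc n" using s by (cases s) auto
  define x where "x = 1 / qint q k"
  define y where "y = 1 / qint q l"
  have qk: "0 < qint q k" "0 < qint q l" using qint_pos q kl by auto
  have a: "gq q k = x - (1 - q)" unfolding x_def gq_def qint_def using q qk
    by (simp add: field_simps qint_def)
  have b: "gq q l = y - (1 - q)" unfolding y_def gq_def qint_def using q qk
    by (simp add: field_simps qint_def)
  have G: "gq q (k-l) * (y - x) = y * gq q k" unfolding x_def y_def using base_rel[OF q kl] .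
  have sum: "(\<Sum>j<s-1. fq q (s-j) k * fq q (j+1) l) = (\<Sum>j<n. x*gq q k^(n-j)*(y*gq q l^j))"
    unfolding n by (intro sum.cong) (auto simp: Suc_diff_le fq_Suc x_def y_def)
  show ?thesis
    unfolding sum unfolding n fq_Suc x_def[symmetric] y_def[symmetric]
    using key_alg[OF a b G, of n] by (simp add: algebra_simps)
qed



context
  fixes q :: real
  assumes q0: "0 < q" and q1: "q < 1"
begin

lemma gq_le: "gq q k \<le> q ^ k"
proof (cases "k = 0")
  case True then show ?thesis by (simp add: gq_def qint_def)
next
  case False
  have "1 \<le> qint q k" using qint_ge1[OF q0 q1] False by simp
  moreover have "0 \<le> q ^ k" using q0 by simp
  ultimately show ?thesis unfolding gq_def using q0
    by (simp add: divide_le_eq mult_le_cancel_left1)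
qed

lemma gsum_fin: "(\<integral>\<^sup>+k. ennreal (gq q k) \<partial>count_space (A::nat set)) < \<infinity>"
proof -
  have "(\<integral>\<^sup>+k. ennreal (gq q k) \<partial>count_space A) \<le> (\<integral>\<^sup>+k. ennreal (q ^ k) \<partial>count_space A)"
    by (rule nn_mono_le) (simp add: gq_le ennreal_leI)
  also have "\<dots> < \<infinity>" using nn_geom_fin q0 q1 by simp
  finally show ?thesis .
qed

lemma shift_split:
  fixes h :: "nat \<Rightarrow> ennreal"
  assumes "l \<le> L"
  shows "(\<integral>\<^sup>+k. h (k-l) \<partial>count_space {L<..}) = (\<Sum>p<l. h (L-p)) + (\<integral>\<^sup>+k. h k \<partial>count_space {L<..})"
proof -
  have "(\<integral>\<^sup>+k. h (k-l) \<partial>count_space {L<..}) = (\<integral>\<^sup>+a. h (a + l - l) \<partial>count_space {L-l<..})"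
    by (rule nn_reindex[where \<psi>="\<lambda>k. k - l"]) (use assms in auto)
  also have "\<dots> = (\<integral>\<^sup>+a. h a \<partial>count_space ({L-l<..L} \<union> {L<..}))"
  proof -
    have "{L-l<..} = {L-l<..L} \<union> {L<..}" using assms by auto
    then show ?thesis by simp
  qed
  also have "\<dots> = (\<integral>\<^sup>+a. h a \<partial>count_space {L-l<..L}) + (\<integral>\<^sup>+a. h a \<partial>count_space {L<..})"
    by (rule nn_union) auto
  also have "(\<integral>\<^sup>+a. h a \<partial>count_space {L-l<..L}) = (\<Sum>a\<in>{L-l<..L}. h a)"
    by (rule nn_integral_count_space_finite) simp
  also have "\<dots> = (\<Sum>p<l. h (L-p))"
    by (rule sum.reindex_bij_witness[where i="\<lambda>p. L - p" and j="\<lambda>a. L - a"]) (use assms in auto)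
  finally show ?thesis .
qed

lemma step:
  assumes l: "1 \<le> l" "l \<le> L" and s: "0 < s"
  shows "(\<integral>\<^sup>+k. ennreal (fq q s k * gq q (k-l)) \<partial>count_space {L<..})
       + (\<Sum>j<s-1. (\<integral>\<^sup>+k. ennreal (fq q (s-j) k) \<partial>count_space {L<..}) * ennreal (fq q (j+1) l))
       = (\<Sum>p<l. ennreal (fq q s l * gq q (L-p)))"
proof -
  define c where "c = ennreal (fq q s l)"
  define Y where "Y = (\<integral>\<^sup>+k. ennreal (gq q k) \<partial>count_space {L<..})"
  have "Y < \<infinity>" unfolding Y_def by (rule gsum_fin)
  then have Yfin: "c * Y \<noteq> \<infinity>" unfolding c_def
    by (simp add: ennreal_mult_eq_top_iff)
  have nnf: "\<And>a b. 0 \<le> fq q a b" using fq_nonneg[OF q0 q1] .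
  have nng: "\<And>a. 0 \<le> gq q a" using gq_nonneg[OF q0 q1] .
  have pw: "ennreal (fq q s k * gq q (k-l)) + (\<Sum>j<s-1. ennreal (fq q (s-j) k) * ennreal (fq q (j+1) l))
            + c * ennreal (gq q k) = c * ennreal (gq q (k-l))" if k: "k \<in> {L<..}" for k
  proof -
    have kl: "l < k" "0 < l" using k l by auto
    have "ennreal (fq q s k * gq q (k-l)) + (\<Sum>j<s-1. ennreal (fq q (s-j) k) * ennreal (fq q (j+1) l))
            + c * ennreal (gq q k)
        = ennreal (fq q s k * gq q (k-l) + (\<Sum>j<s-1. fq q (s-j) k * fq q (j+1) l) + fq q s l * gq q k)"
      unfolding c_def using nnf nng
      by (simp add: ennreal_plus ennreal_mult sum_nonneg mult_nonneg_nonneg flip: sum_ennreal)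
    also have "\<dots> = ennreal (fq q s l * gq q (k-l))"
      by (simp only: pointwise[OF q0 q1 kl s])
    also have "\<dots> = c * ennreal (gq q (k-l))" unfolding c_def using nnf nng by (simp add: ennreal_mult)
    finally show ?thesis .
  qed
  have "(\<integral>\<^sup>+k. ennreal (fq q s k * gq q (k-l)) + (\<Sum>j<s-1. ennreal (fq q (s-j) k) * ennreal (fq q (j+1) l))
            + c * ennreal (gq q k) \<partial>count_space {L<..})
      = (\<integral>\<^sup>+k. c * ennreal (gq q (k-l)) \<partial>count_space {L<..})"
    by (rule nn_integral_cong) (use pw in simp)
  note e1 = this
  have "(\<integral>\<^sup>+k. ennreal (fq q s k * gq q (k-l)) + (\<Sum>j<s-1. ennreal (fq q (s-j) k) * ennreal (fq q (j+1) l))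
            + c * ennreal (gq q k) \<partial>count_space {L<..})
      = (\<integral>\<^sup>+k. ennreal (fq q s k * gq q (k-l)) \<partial>count_space {L<..})
       + (\<Sum>j<s-1. (\<integral>\<^sup>+k. ennreal (fq q (s-j) k) \<partial>count_space {L<..}) * ennreal (fq q (j+1) l))
       + c * Y"
    unfolding Y_def
    by (simp add: nn_integral_add nn_integral_sum nn_integral_multc nn_integral_cmult)
  note e2 = this
  have "(\<integral>\<^sup>+k. c * ennreal (gq q (k-l)) \<partial>count_space {L<..})
      = (\<Sum>p<l. ennreal (fq q s l * gq q (L-p))) + c * Y"
  proof -
    have "(\<integral>\<^sup>+k. c * ennreal (gq q (k-l)) \<partial>count_space {L<..}) = c * (\<integral>\<^sup>+k. ennreal (gq q (k-l)) \<partial>count_space {L<..})"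
      by (simp add: nn_integral_cmult)
    also have "\<dots> = c * ((\<Sum>p<l. ennreal (gq q (L-p))) + Y)"
      unfolding Y_def using shift_split[OF l(2), of "\<lambda>a. ennreal (gq q a)"] by simp
    also have "\<dots> = (\<Sum>p<l. ennreal (fq q s l * gq q (L-p))) + c * Y"
      unfolding c_def using nnf nng by (simp add: distrib_left sum_distrib_left ennreal_mult del: sum_ennreal)
    finally show ?thesis .
  qed
  note e3 = this
  have "(\<integral>\<^sup>+k. ennreal (fq q s k * gq q (k-l)) \<partial>count_space {L<..})
       + (\<Sum>j<s-1. (\<integral>\<^sup>+k. ennreal (fq q (s-j) k) \<partial>count_space {L<..}) * ennreal (fq q (j+1) l))
       + c * Y = (\<Sum>p<l. ennreal (fq q s l * gq q (L-p))) + c * Y"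
    using trans[OF trans[OF e2[symmetric] e1] e3] .
  then have "c * Y + ((\<integral>\<^sup>+k. ennreal (fq q s k * gq q (k-l)) \<partial>count_space {L<..})
       + (\<Sum>j<s-1. (\<integral>\<^sup>+k. ennreal (fq q (s-j) k) \<partial>count_space {L<..}) * ennreal (fq q (j+1) l)))
       = c * Y + (\<Sum>p<l. ennreal (fq q s l * gq q (L-p)))"
    by (simp only: add.commute)
  then show ?thesis using Yfin ennreal_add_left_cancel by blast
qed


lemma star:
  assumes s: "0 < s"
  shows "1 \<le> l \<Longrightarrow> l \<le> L \<Longrightarrow>
    (\<integral>\<^sup>+k. (\<Sum>p<l. ennreal (fq q s k * gq q (k-p))) \<partial>count_space {L<..})
    + (\<Sum>j<s-1. (\<integral>\<^sup>+k. ennreal (fq q (s-j) k) \<partial>count_space {L<..}) * (\<Sum>p\<in>{0<..<l}. ennreal (fq q (j+1) p)))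
    = (\<integral>\<^sup>+k. ennreal (fq q (Suc s) k) \<partial>count_space {L<..})
    + (\<Sum>m<l. \<Sum>p<m. ennreal (fq q s m * gq q (L-p)))"
proof (induction l)
  case 0 then show ?case by simp
next
  case (Suc l)
  show ?case
  proof (cases "l = 0")
    case True
    have e: "\<And>k. fq q s k * gq q k = fq q (Suc s) k" using gq_fq[OF s] by (simp add: mult.commute)
    show ?thesis using True by (simp add: e)
  next
    case False
    have l: "1 \<le> l" "l \<le> L" using False Suc.prems by auto
    note IH = Suc.IH[OF l]
    have A: "(\<integral>\<^sup>+k. (\<Sum>p<Suc l. ennreal (fq q s k * gq q (k-p))) \<partial>count_space {L<..})
       = (\<integral>\<^sup>+k. (\<Sum>p<l. ennreal (fq q s k * gq q (k-p))) \<partial>count_space {L<..})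
       + (\<integral>\<^sup>+k. ennreal (fq q s k * gq q (k-l)) \<partial>count_space {L<..})"
      by (simp add: nn_integral_add)
    have ins: "{0<..<Suc l} = insert l {0<..<l}" using False by auto
    have C: "(\<Sum>j<s-1. (\<integral>\<^sup>+k. ennreal (fq q (s-j) k) \<partial>count_space {L<..}) * (\<Sum>p\<in>{0<..<Suc l}. ennreal (fq q (j+1) p)))
      = (\<Sum>j<s-1. (\<integral>\<^sup>+k. ennreal (fq q (s-j) k) \<partial>count_space {L<..}) * (\<Sum>p\<in>{0<..<l}. ennreal (fq q (j+1) p)))
      + (\<Sum>j<s-1. (\<integral>\<^sup>+k. ennreal (fq q (s-j) k) \<partial>count_space {L<..}) * ennreal (fq q (j+1) l))"
      unfolding ins by (simp add: distrib_left sum.distrib add.commute del: sum_ennreal)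
    have B: "(\<Sum>m<Suc l. \<Sum>p<m. ennreal (fq q s m * gq q (L-p)))
      = (\<Sum>m<l. \<Sum>p<m. ennreal (fq q s m * gq q (L-p))) + (\<Sum>p<l. ennreal (fq q s l * gq q (L-p)))"
      by (simp del: sum_ennreal)
    note st = step[OF l s]
    show ?thesis
      unfolding A C B
      using IH st by (simp add: ac_simps del: sum_ennreal)
  qed
qed


lemma fq_le_pow: assumes "2 \<le> s" "0 < k" shows "fq q s k \<le> q ^ k"
proof -
  have "1 \<le> qint q k" using qint_ge1[OF q0 q1 assms(2)] .
  then have d: "1 \<le> qint q k ^ s" by (simp add: one_le_power)
  have "q ^ ((s-1)*k) \<le> q ^ k"
    using assms q0 q1 by (intro power_decreasing) auto
  moreover have "fq q s k \<le> q ^ ((s-1)*k)"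
    unfolding fq_def using d q0 by (simp add: divide_le_eq mult_le_cancel_left1)
  ultimately show ?thesis by linarith
qed

lemma fq_le1: assumes "0 < k" shows "fq q s k \<le> 1"
proof -
  have "1 \<le> qint q k" using qint_ge1[OF q0 q1 assms] .
  then have d: "1 \<le> qint q k ^ s" by (simp add: one_le_power)
  have "q ^ ((s-1)*k) \<le> 1" using q0 q1 by (simp add: power_le_one)
  moreover have "fq q s k \<le> q ^ ((s-1)*k)"
    unfolding fq_def using d q0 by (simp add: divide_le_eq mult_le_cancel_left1)
  ultimately show ?thesis by linarith
qed

lemma gq_le1: "gq q k \<le> 1"
  using gq_le[of k] q0 q1 by (meson order.trans power_le_one less_imp_le)

end

lemma double_fin:
  fixes r :: real
  assumes "0 \<le> r" "r < 1"
  shows "(\<integral>\<^sup>+p. \<integral>\<^sup>+k. ennreal (r ^ p * r ^ k) \<partial>count_space (B p) \<partial>count_space (A::nat set)) < \<infinity>"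
proof -
  have "(\<integral>\<^sup>+p. \<integral>\<^sup>+k. ennreal (r ^ p * r ^ k) \<partial>count_space (B p) \<partial>count_space A)
     \<le> (\<integral>\<^sup>+p. ennreal (r ^ p) * (\<integral>\<^sup>+k. ennreal (r ^ k) \<partial>count_space (UNIV::nat set)) \<partial>count_space A)"
  proof (rule nn_mono_le)
    fix p assume "p \<in> A"
    have "(\<integral>\<^sup>+k. ennreal (r ^ p * r ^ k) \<partial>count_space (B p)) \<le> (\<integral>\<^sup>+k. ennreal (r ^ p * r ^ k) \<partial>count_space UNIV)"
      by (rule nn_subset_le) auto
    also have "\<dots> = ennreal (r ^ p) * (\<integral>\<^sup>+k. ennreal (r ^ k) \<partial>count_space (UNIV::nat set))"
      using assms by (simp add: ennreal_mult nn_integral_cmult)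
    finally show "(\<integral>\<^sup>+k. ennreal (r ^ p * r ^ k) \<partial>count_space (B p)) \<le> ennreal (r ^ p) * (\<integral>\<^sup>+k. ennreal (r ^ k) \<partial>count_space (UNIV::nat set))" .
  qed
  also have "\<dots> = (\<integral>\<^sup>+p. ennreal (r ^ p) \<partial>count_space A) * (\<integral>\<^sup>+k. ennreal (r ^ k) \<partial>count_space (UNIV::nat set))"
    by (simp add: nn_integral_multc)
  also have "\<dots> < \<infinity>" using nn_geom_fin[OF assms] by (simp add: ennreal_mult_less_top)
  finally show ?thesis .
qed

context
  fixes q :: real
  assumes q0: "0 < q" and q1: "q < 1"
begin

lemma sumformula:
  assumes s: "2 \<le> s"
  shows "(\<integral>\<^sup>+k. ennreal (fq q (Suc s) k) \<partial>count_space {0<..})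
       = (\<Sum>j<s-1. \<integral>\<^sup>+p. \<integral>\<^sup>+k. ennreal (fq q (s-j) k * fq q (j+1) p) \<partial>count_space {p<..} \<partial>count_space {0<..})"
proof -
  have s0: "0 < s" using s by simp
  have nnf: "\<And>a b. 0 \<le> fq q a b" using fq_nonneg[OF q0 q1] .
  have nng: "\<And>a. 0 \<le> gq q a" using gq_nonneg[OF q0 q1] .
  define X where "X = (\<integral>\<^sup>+p. \<integral>\<^sup>+k. ennreal (fq q s k * gq q (k-p)) \<partial>count_space {p<..} \<partial>count_space {0<..})"
  define X' where "X' = (\<integral>\<^sup>+p. (\<Sum>i\<in>{0<..<p}. ennreal (fq q s p * gq q (p-i))) \<partial>count_space {0<..})"
  define W where "W = (\<Sum>j<s-1. \<integral>\<^sup>+p. \<integral>\<^sup>+k. ennreal (fq q (s-j) k * fq q (j+1) p) \<partial>count_space {p<..} \<partial>count_space {0<..})"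
  define Z where "Z = (\<integral>\<^sup>+k. ennreal (fq q (Suc s) k) \<partial>count_space {0<..})"
  have pw: "(\<integral>\<^sup>+k. ennreal (fq q s k * gq q (k-p)) \<partial>count_space {p<..})
      + (\<Sum>j<s-1. \<integral>\<^sup>+k. ennreal (fq q (s-j) k * fq q (j+1) p) \<partial>count_space {p<..})
      = ennreal (fq q (Suc s) p) + (\<Sum>i\<in>{0<..<p}. ennreal (fq q s p * gq q (p-i)))" if p: "p \<in> {0<..}" for p
  proof -
    have e1: "(\<Sum>j<s-1. \<integral>\<^sup>+k. ennreal (fq q (s-j) k * fq q (j+1) p) \<partial>count_space {p<..})
        = (\<Sum>j<s-1. (\<integral>\<^sup>+k. ennreal (fq q (s-j) k) \<partial>count_space {p<..}) * ennreal (fq q (j+1) p))"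
      using nnf by (simp add: ennreal_mult nn_integral_multc)
    have e2: "(\<Sum>i<p. ennreal (fq q s p * gq q (p-i))) = ennreal (fq q (Suc s) p) + (\<Sum>i\<in>{0<..<p}. ennreal (fq q s p * gq q (p-i)))"
    proof -
      have "{..<p} = insert 0 {0<..<p}" using p by auto
      moreover have "fq q s p * gq q p = fq q (Suc s) p" using gq_fq[OF s0] by (simp add: mult.commute)
      ultimately show ?thesis by (simp del: sum_ennreal)
    qed
    have st: "(\<integral>\<^sup>+k. ennreal (fq q s k * gq q (k-p)) \<partial>count_space {p<..})
       + (\<Sum>j<s-1. (\<integral>\<^sup>+k. ennreal (fq q (s-j) k) \<partial>count_space {p<..}) * ennreal (fq q (j+1) p))
       = (\<Sum>i<p. ennreal (fq q s p * gq q (p-i)))"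
      by (rule step) (use p s0 q0 q1 in auto)
    show ?thesis unfolding e1 st e2 ..
  qed
  have "X + W = (\<integral>\<^sup>+p. (\<integral>\<^sup>+k. ennreal (fq q s k * gq q (k-p)) \<partial>count_space {p<..})
      + (\<Sum>j<s-1. \<integral>\<^sup>+k. ennreal (fq q (s-j) k * fq q (j+1) p) \<partial>count_space {p<..}) \<partial>count_space {0<..})"
    unfolding X_def W_def by (simp add: nn_integral_add nn_integral_sum)
  also have "\<dots> = (\<integral>\<^sup>+p. ennreal (fq q (Suc s) p) + (\<Sum>i\<in>{0<..<p}. ennreal (fq q s p * gq q (p-i))) \<partial>count_space {0<..})"
    by (rule nn_integral_cong) (use pw in simp)
  also have "\<dots> = Z + X'" unfolding Z_def X'_def by (simp add: nn_integral_add del: sum_ennreal)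
  finally have eq: "X + W = Z + X'" .
  have XX': "X = X'"
  proof -
    have "X = (\<integral>\<^sup>+z. ennreal (fq q s (snd z) * gq q (snd z - fst z)) \<partial>count_space (Sigma {0<..} (\<lambda>p. {p<..})))"
      unfolding X_def by (simp add: nn_Sigma)
    also have "\<dots> = (\<integral>\<^sup>+z. ennreal (fq q s (snd (prod.swap z)) * gq q (snd (prod.swap z) - fst (prod.swap z))) \<partial>count_space (Sigma {0<..} (\<lambda>k. {0<..<k})))"
      by (rule nn_reindex[where F="\<lambda>z. ennreal (fq q s (snd z) * gq q (snd z - fst z))" and \<phi>=prod.swap and \<psi>=prod.swap]) auto
    also have "\<dots> = (\<integral>\<^sup>+z. ennreal (fq q s (fst z) * gq q (fst z - snd z)) \<partial>count_space (Sigma {0<..} (\<lambda>k. {0<..<k})))"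
      by simp
    also have "\<dots> = X'" unfolding X'_def
      by (simp add: nn_Sigma nn_integral_count_space_finite del: sum_ennreal)
    finally show ?thesis .
  qed
  have Xfin: "X < \<infinity>"
  proof -
    define r where "r = sqrt q"
    have r: "0 \<le> r" "r < 1" unfolding r_def using q0 q1 by (auto simp: real_sqrt_lt_1_iff)
    have "X \<le> (\<integral>\<^sup>+p. \<integral>\<^sup>+k. ennreal (r ^ p * r ^ k) \<partial>count_space {p<..} \<partial>count_space {0<..})"
      unfolding X_def
    proof (intro nn_mono_le ennreal_leI)
      fix p k :: nat assume p: "p \<in> {0<..}" and k: "k \<in> {p<..}"
      have "fq q s k * gq q (k-p) \<le> q ^ k * 1"
        using fq_le_pow[OF q0 q1 s, of k] gq_le1[OF q0 q1, of "k-p"] k p nnf nng q0 by (intro mult_mono) auto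
      also have "\<dots> = r ^ (2*k)" unfolding r_def using q0 by (simp add: power_mult)
      also have "\<dots> \<le> r ^ (p + k)" using r k by (intro power_decreasing) auto
      finally show "fq q s k * gq q (k-p) \<le> r ^ p * r ^ k" by (simp add: power_add)
    qed
    also have "\<dots> < \<infinity>" by (rule double_fin[OF r])
    finally show ?thesis .
  qed
  have "X + W = X + Z" using eq XX' by (simp add: add.commute)
  then have "W = Z" using Xfin ennreal_add_left_cancel by auto
  then show ?thesis unfolding W_def Z_def by simp
qed

end


definition DP :: "nat \<Rightarrow> nat list set" where
  "DP N = {ks. length ks = N \<and> sorted_wrt (>) ks \<and> (\<forall>k\<in>set ks. 0 < k)}"

lemma sorted_hd: "sorted_wrt (>) xs \<Longrightarrow> x \<in> set xs \<Longrightarrow> x \<le> hd (xs::nat list)"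
  by (induction xs) auto

lemma sorted_last: "sorted_wrt (>) xs \<Longrightarrow> x \<in> set xs \<Longrightarrow> last (xs::nat list) \<le> x"
proof (induction xs)
  case Nil then show ?case by simp
next
  case (Cons a xs)
  show ?case
  proof (cases "xs = []")
    case True then show ?thesis using Cons by simp
  next
    case False
    then have l: "last xs \<in> set xs" by simp
    have la: "last xs < a" using Cons.prems(1) l by simp
    show ?thesis
    proof (cases "x = a")
      case True then show ?thesis using la False by simp
    next
      case F2: False
      then have "x \<in> set xs" using Cons.prems(2) by simp
      then show ?thesis using Cons.IH Cons.prems(1) False by simp
    qed
  qed
qed

lemma sorted_CA:
  assumes so: "sorted_wrt (>) mid" and ne: "mid \<noteq> []"
  shows "sorted_wrt (>) (k # mid @ [p]) \<longleftrightarrow> hd mid < (k::nat) \<and> p < last mid"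
proof
  have h: "hd mid \<in> set mid" "last mid \<in> set mid" using ne by auto
  assume "sorted_wrt (>) (k # mid @ [p])"
  then show "hd mid < k \<and> p < last mid" using h by (auto simp: sorted_wrt_append)
next
  have h: "hd mid \<in> set mid" "last mid \<in> set mid" using ne by auto
  have lh: "last mid \<le> hd mid" using sorted_hd[OF so h(2)] .
  assume a: "hd mid < k \<and> p < last mid"
  have "\<forall>x\<in>set mid. x < k" using a sorted_hd[OF so] by (meson le_less_trans)
  moreover have "\<forall>x\<in>set mid. p < x" using a sorted_last[OF so] by (meson less_le_trans)
  moreover have "p < k" using a lh by linarith
  ultimately show "sorted_wrt (>) (k # mid @ [p])" using so by (auto simp: sorted_wrt_append)
qed

lemma sorted_A2:
  assumes so: "sorted_wrt (>) mid" and ne: "mid \<noteq> []"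
  shows "sorted_wrt (>) (mid @ [m', p]) \<longleftrightarrow> m' < last mid \<and> (p::nat) < m'"
proof
  have h: "last mid \<in> set mid" using ne by auto
  assume "sorted_wrt (>) (mid @ [m', p])"
  then show "m' < last mid \<and> p < m'" using h by (auto simp: sorted_wrt_append)
next
  assume a: "m' < last mid \<and> p < m'"
  have "\<forall>x\<in>set mid. m' < x" using a sorted_last[OF so] by (meson less_le_trans)
  moreover have "\<forall>x\<in>set mid. p < x" using a sorted_last[OF so] by (meson less_le_trans less_trans)
  ultimately show "sorted_wrt (>) (mid @ [m', p])" using so a by (auto simp: sorted_wrt_append)
qed

lemma sorted_C1:
  assumes so: "sorted_wrt (>) mid" and ne: "mid \<noteq> []"
  shows "sorted_wrt (>) (k # mid) \<longleftrightarrow> hd mid < (k::nat)"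
proof
  have h: "hd mid \<in> set mid" using ne by auto
  assume "sorted_wrt (>) (k # mid)"
  then show "hd mid < k" using h by auto
next
  assume a: "hd mid < k"
  have "\<forall>x\<in>set mid. x < k" using a sorted_hd[OF so] by (meson le_less_trans)
  then show "sorted_wrt (>) (k # mid)" using so by auto
qed

lemma len_KMP: "length ks = Suc (Suc m) \<Longrightarrow> \<exists>k mid p. ks = k # mid @ [p] \<and> length mid = m"
proof -
  assume "length ks = Suc (Suc m)"
  then obtain k ys where ks: "ks = k # ys" "length ys = Suc m" by (cases ks) auto
  then obtain mid p where "ys = mid @ [p]" "length mid = m" by (cases ys rule: rev_cases) auto
  then show ?thesis using ks by blast
qed

lemma len_MKP: "length ks = Suc (Suc m) \<Longrightarrow> \<exists>mid a p. ks = mid @ [a, p] \<and> length mid = m"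
proof -
  assume "length ks = Suc (Suc m)"
  then obtain ys p where ks: "ks = ys @ [p]" "length ys = Suc m" by (cases ks rule: rev_cases) auto
  then obtain mid a where "ys = mid @ [a]" "length mid = m" by (cases ys rule: rev_cases) auto
  then show ?thesis using ks by auto
qed

lemma dec_KMP:
  fixes H :: "nat list \<Rightarrow> ennreal"
  assumes m: "0 < m"
  shows "(\<integral>\<^sup>+ks. H ks \<partial>count_space {ks. length ks = Suc (Suc m) \<and> sorted_wrt (>) ks \<and> (\<forall>x\<in>set ks. b \<le> x)})
    = (\<integral>\<^sup>+mid. \<integral>\<^sup>+k. \<integral>\<^sup>+p. H (k # mid @ [p]) \<partial>count_space {b..<last mid} \<partial>count_space {hd mid<..} \<partial>count_space (DP m))"
proof -
  let ?S = "{ks. length ks = Suc (Suc m) \<and> sorted_wrt (>) ks \<and> (\<forall>x\<in>set ks. b \<le> x)}"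
  let ?Sig = "Sigma (DP m) (\<lambda>mid. {hd mid<..} \<times> {b..<last mid})"
  have "(\<integral>\<^sup>+ks. H ks \<partial>count_space ?S) = (\<integral>\<^sup>+z. H ((\<lambda>(mid,(k,p)). k # mid @ [p]) z) \<partial>count_space ?Sig)"
  proof (rule nn_reindex[where \<psi>="\<lambda>ks. (butlast (tl ks), (hd ks, last ks))"])
    fix z assume "z \<in> ?Sig"
    then obtain mid k p where z: "z = (mid,(k,p))" "mid \<in> DP m" "hd mid < k" "b \<le> p" "p < last mid" by auto
    have ne: "mid \<noteq> []" using z(2) m unfolding DP_def by auto
    have so: "sorted_wrt (>) mid" using z(2) unfolding DP_def by auto
    show "(\<lambda>ks. (butlast (tl ks), (hd ks, last ks))) ((\<lambda>(mid,(k,p)). k # mid @ [p]) z) = z"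
      using z by simp
    have "\<forall>x\<in>set mid. p < x" using sorted_last[OF so] z(5) by (meson less_le_trans)
    moreover have "p < k" using sorted_hd[OF so, of "last mid"] ne z by simp
    ultimately show "(\<lambda>(mid,(k,p)). k # mid @ [p]) z \<in> ?S"
      using z sorted_CA[OF so ne] z(2) unfolding DP_def by auto
  next
    fix ks assume ks: "ks \<in> ?S"
    then obtain k mid p where e: "ks = k # mid @ [p]" "length mid = m" using len_KMP by blast
    have ne: "mid \<noteq> []" using e m by auto
    have so: "sorted_wrt (>) mid" using ks e by (simp add: sorted_wrt_append)
    have sC: "hd mid < k" "p < last mid" using sorted_CA[OF so ne] ks e by auto
    have "\<forall>x\<in>set mid. p < x" using ks e by (simp add: sorted_wrt_append)
    then have "\<forall>x\<in>set mid. 0 < x" by auto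
    then show "(\<lambda>ks. (butlast (tl ks), (hd ks, last ks))) ks \<in> ?Sig"
      using e sC so ks unfolding DP_def by auto
    show "(\<lambda>(mid,(k,p)). k # mid @ [p]) ((\<lambda>ks. (butlast (tl ks), (hd ks, last ks))) ks) = ks"
      using e by simp
  qed
  also have "\<dots> = (\<integral>\<^sup>+mid. \<integral>\<^sup>+kp. H (fst kp # mid @ [snd kp]) \<partial>count_space ({hd mid<..} \<times> {b..<last mid}) \<partial>count_space (DP m))"
    by (subst nn_Sigma) (simp add: case_prod_beta)
  also have "\<dots> = (\<integral>\<^sup>+mid. \<integral>\<^sup>+k. \<integral>\<^sup>+p. H (k # mid @ [p]) \<partial>count_space {b..<last mid} \<partial>count_space {hd mid<..} \<partial>count_space (DP m))"
    by (subst nn_Sigma) simp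
  finally show ?thesis .
qed


lemma dec_MKP:
  fixes H :: "nat list \<Rightarrow> ennreal"
  assumes m: "0 < m"
  shows "(\<integral>\<^sup>+ks. H ks \<partial>count_space {ks. length ks = Suc (Suc m) \<and> sorted_wrt (>) ks})
    = (\<integral>\<^sup>+mid. \<integral>\<^sup>+a. \<integral>\<^sup>+p. H (mid @ [a, p]) \<partial>count_space {..<a} \<partial>count_space {..<last mid} \<partial>count_space (DP m))"
proof -
  let ?S = "{ks::nat list. length ks = Suc (Suc m) \<and> sorted_wrt (>) ks}"
  let ?Sig = "Sigma (DP m) (\<lambda>mid. Sigma {..<last mid} (\<lambda>a. {..<a}))"
  have "(\<integral>\<^sup>+ks. H ks \<partial>count_space ?S) = (\<integral>\<^sup>+z. H ((\<lambda>(mid,(a,p)). mid @ [a, p]) z) \<partial>count_space ?Sig)"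
  proof (rule nn_reindex[where \<psi>="\<lambda>ks. (take m ks, (ks ! m, ks ! Suc m))"])
    fix z assume "z \<in> ?Sig"
    then obtain mid a p where z: "z = (mid,(a,p))" "mid \<in> DP m" "a < last mid" "p < a" by auto
    have ne: "mid \<noteq> []" using z(2) m unfolding DP_def by auto
    have so: "sorted_wrt (>) mid" using z(2) unfolding DP_def by auto
    have len: "length mid = m" using z(2) unfolding DP_def by auto
    show "(\<lambda>ks. (take m ks, (ks ! m, ks ! Suc m))) ((\<lambda>(mid,(a,p)). mid @ [a, p]) z) = z"
      using z len by (simp add: nth_append)
    show "(\<lambda>(mid,(a,p)). mid @ [a, p]) z \<in> ?S"
      using z sorted_A2[OF so ne] len by auto
  next
    fix ks assume ks: "ks \<in> ?S"
    then obtain mid a p where e: "ks = mid @ [a, p]" "length mid = m" using len_MKP by blast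
    have ne: "mid \<noteq> []" using e m by auto
    have so: "sorted_wrt (>) mid" using ks e by (simp add: sorted_wrt_append)
    have sC: "a < last mid" "p < a" using sorted_A2[OF so ne] ks e by auto
    have "\<forall>x\<in>set mid. a < x" using ks e by (simp add: sorted_wrt_append)
    then have "\<forall>x\<in>set mid. 0 < x" by auto
    then show "(\<lambda>ks. (take m ks, (ks ! m, ks ! Suc m))) ks \<in> ?Sig"
      using e sC so unfolding DP_def by (auto simp: nth_append)
    show "(\<lambda>(mid,(a,p)). mid @ [a, p]) ((\<lambda>ks. (take m ks, (ks ! m, ks ! Suc m))) ks) = ks"
      using e by (simp add: nth_append)
  qed
  also have "\<dots> = (\<integral>\<^sup>+mid. \<integral>\<^sup>+ap. H (mid @ [fst ap, snd ap]) \<partial>count_space (Sigma {..<last mid} (\<lambda>a. {..<a})) \<partial>count_space (DP m))"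
    by (subst nn_Sigma) (simp add: case_prod_beta)
  also have "\<dots> = (\<integral>\<^sup>+mid. \<integral>\<^sup>+a. \<integral>\<^sup>+p. H (mid @ [a, p]) \<partial>count_space {..<a} \<partial>count_space {..<last mid} \<partial>count_space (DP m))"
    by (subst nn_Sigma) simp
  finally show ?thesis .
qed

lemma dec_KM:
  fixes H :: "nat list \<Rightarrow> ennreal"
  assumes m: "0 < m"
  shows "(\<integral>\<^sup>+ks. H ks \<partial>count_space (DP (Suc m)))
    = (\<integral>\<^sup>+mid. \<integral>\<^sup>+k. H (k # mid) \<partial>count_space {hd mid<..} \<partial>count_space (DP m))"
proof -
  let ?Sig = "Sigma (DP m) (\<lambda>mid. {hd mid<..})"
  have "(\<integral>\<^sup>+ks. H ks \<partial>count_space (DP (Suc m))) = (\<integral>\<^sup>+z. H ((\<lambda>(mid,k). k # mid) z) \<partial>count_space ?Sig)"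
  proof (rule nn_reindex[where \<psi>="\<lambda>ks. (tl ks, hd ks)"])
    fix z assume "z \<in> ?Sig"
    then obtain mid k where z: "z = (mid,k)" "mid \<in> DP m" "hd mid < k" by auto
    have ne: "mid \<noteq> []" using z(2) m unfolding DP_def by auto
    have so: "sorted_wrt (>) mid" using z(2) unfolding DP_def by auto
    show "(\<lambda>ks. (tl ks, hd ks)) ((\<lambda>(mid,k). k # mid) z) = z" using z by simp
    have "0 < k" using z by simp
    then show "(\<lambda>(mid,k). k # mid) z \<in> DP (Suc m)"
      using z sorted_C1[OF so ne] unfolding DP_def by auto
  next
    fix ks assume ks: "ks \<in> DP (Suc m)"
    then obtain k mid where e: "ks = k # mid" "length mid = m" unfolding DP_def by (cases ks) auto
    have ne: "mid \<noteq> []" using e m by auto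
    have so: "sorted_wrt (>) mid" using ks e unfolding DP_def by simp
    have sC: "hd mid < k" using sorted_C1[OF so ne] ks e unfolding DP_def by auto
    show "(\<lambda>ks. (tl ks, hd ks)) ks \<in> ?Sig"
      using e sC so ks unfolding DP_def by auto
    show "(\<lambda>(mid,k). k # mid) ((\<lambda>ks. (tl ks, hd ks)) ks) = ks" using e by simp
  qed
  also have "\<dots> = (\<integral>\<^sup>+mid. \<integral>\<^sup>+k. H (k # mid) \<partial>count_space {hd mid<..} \<partial>count_space (DP m))"
    by (subst nn_Sigma) simp
  finally show ?thesis .
qed

lemma dec_1:
  fixes H :: "nat list \<Rightarrow> ennreal"
  shows "(\<integral>\<^sup>+ks. H ks \<partial>count_space (DP 1)) = (\<integral>\<^sup>+k. H [k] \<partial>count_space {0<..})"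
  by (rule nn_reindex[where \<psi>="\<lambda>ks. hd ks"]) (auto simp: DP_def length_Suc_conv)

lemma dec_2:
  fixes H :: "nat list \<Rightarrow> ennreal"
  shows "(\<integral>\<^sup>+ks. H ks \<partial>count_space (DP 2))
     = (\<integral>\<^sup>+p. \<integral>\<^sup>+k. H [k, p] \<partial>count_space {p<..} \<partial>count_space {0<..})"
proof -
  have "(\<integral>\<^sup>+ks. H ks \<partial>count_space (DP 2)) = (\<integral>\<^sup>+z. H ((\<lambda>(p,k). [k, p]) z) \<partial>count_space (Sigma {0<..} (\<lambda>p. {p<..})))"
    by (rule nn_reindex[where \<psi>="\<lambda>ks. (ks ! 1, ks ! 0)"])
       (auto simp: DP_def length_Suc_conv numeral_2_eq_2)
  also have "\<dots> = (\<integral>\<^sup>+p. \<integral>\<^sup>+k. H [k, p] \<partial>count_space {p<..} \<partial>count_space {0<..})"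
    by (subst nn_Sigma) simp
  finally show ?thesis .
qed



lemma sum_list_le: "(\<forall>x\<in>set xs. x \<le> c) \<Longrightarrow> sum_list xs \<le> length xs * (c::nat)"
  by (induction xs) auto

lemma lists_geom:
  fixes r :: real
  assumes r: "0 \<le> r" "r < 1"
  shows "(\<integral>\<^sup>+ks. ennreal (r ^ sum_list ks) \<partial>count_space {ks::nat list. length ks = N}) = ennreal (1/(1-r)) ^ N"
proof (induction N)
  case 0
  have "{ks::nat list. length ks = 0} = {[]}" by auto
  then show ?case by (simp add: nn_integral_count_space_finite)
next
  case (Suc N)
  have "(\<integral>\<^sup>+ks. ennreal (r ^ sum_list ks) \<partial>count_space {ks::nat list. length ks = Suc N})
     = (\<integral>\<^sup>+z. ennreal (r ^ sum_list ((\<lambda>(x,xs). x # xs) z)) \<partial>count_space (Sigma (UNIV::nat set) (\<lambda>_. {ks::nat list. length ks = N})))"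
    by (rule nn_reindex[where \<psi>="\<lambda>ks. (hd ks, tl ks)"]) (auto simp: length_Suc_conv)
  also have "\<dots> = (\<integral>\<^sup>+x. \<integral>\<^sup>+xs. ennreal (r ^ x) * ennreal (r ^ sum_list xs) \<partial>count_space {ks::nat list. length ks = N} \<partial>count_space UNIV)"
    using r by (subst nn_Sigma) (simp add: power_add ennreal_mult)
  also have "\<dots> = (\<integral>\<^sup>+x. ennreal (r ^ x) * ennreal (1/(1-r)) ^ N \<partial>count_space UNIV)"
    by (simp add: nn_integral_cmult Suc)
  also have "\<dots> = ennreal (1/(1-r)) * ennreal (1/(1-r)) ^ N"
    by (simp add: nn_integral_multc nn_geom[OF r])
  finally show ?case by simp
qed

lemma list_fin:
  assumes q0: "0 < q" and q1: "q < (1::real)" and N: "0 < N"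
  shows "(\<integral>\<^sup>+ks. ennreal (q ^ hd ks) \<partial>count_space {ks::nat list. length ks = N \<and> sorted_wrt (>) ks}) < \<infinity>"
proof -
  define r where "r = root N q"
  have r0: "0 < r" unfolding r_def using q0 N by simp
  have r1: "r < 1" unfolding r_def using q1 N by (simp add: real_root_lt_1_iff)
  have rN: "r ^ N = q" unfolding r_def using q0 N by (simp add: real_root_pow_pos2)
  have "(\<integral>\<^sup>+ks. ennreal (q ^ hd ks) \<partial>count_space {ks::nat list. length ks = N \<and> sorted_wrt (>) ks})
     \<le> (\<integral>\<^sup>+ks. ennreal (r ^ sum_list ks) \<partial>count_space {ks::nat list. length ks = N \<and> sorted_wrt (>) ks})"
  proof (intro nn_mono_le ennreal_leI)
    fix ks :: "nat list" assume ks: "ks \<in> {ks::nat list. length ks = N \<and> sorted_wrt (>) ks}"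
    have "sum_list ks \<le> N * hd ks" using sum_list_le[of ks "hd ks"] sorted_hd ks by auto
    then have "r ^ (N * hd ks) \<le> r ^ sum_list ks" using r0 r1 by (intro power_decreasing) auto
    then show "q ^ hd ks \<le> r ^ sum_list ks" by (simp add: power_mult rN)
  qed
  also have "\<dots> \<le> (\<integral>\<^sup>+ks. ennreal (r ^ sum_list ks) \<partial>count_space {ks::nat list. length ks = N})"
    by (rule nn_subset_le) auto
  also have "\<dots> < \<infinity>" using lists_geom[of r N] r0 r1 by (simp add: ennreal_power)
  finally show ?thesis .
qed

lemma prod_le_factor:
  fixes f :: "nat \<Rightarrow> real"
  assumes "finite I" "j \<in> I" "\<And>i. i \<in> I \<Longrightarrow> 0 \<le> f i \<and> f i \<le> 1"
  shows "prod f I \<le> f j"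
proof -
  have "prod f I = f j * prod f (I - {j})" using assms by (simp add: prod.remove)
  moreover have "prod f (I - {j}) \<le> 1" using assms by (intro prod_le_1) auto
  moreover have "0 \<le> f j" using assms by auto
  ultimately show ?thesis by (simp add: mult_left_le)
qed

lemma Pr_le:
  assumes q0: "0 < q" and q1: "q < (1::real)" and j0: "j0 < length t" "2 \<le> t ! j0"
    and pos: "\<And>j. j < length t \<Longrightarrow> 0 < ks ! j"
  shows "Pr q t ks \<le> q ^ (ks ! j0)"
proof -
  have "Pr q t ks \<le> fq q (t ! j0) (ks ! j0)" unfolding Pr_def
    by (rule prod_le_factor) (use j0 pos fq_nonneg[OF q0 q1] fq_le1[OF q0 q1] in auto)
  also have "\<dots> \<le> q ^ (ks ! j0)" using fq_le_pow[OF q0 q1 j0(2) pos[OF j0(1)]] .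
  finally show ?thesis .
qed

lemma zeta_fin:
  assumes q0: "0 < q" and q1: "q < (1::real)" and t: "t \<noteq> []" "2 \<le> hd t"
  shows "(\<integral>\<^sup>+ks. ennreal (Pr q t ks) \<partial>count_space (DP (length t))) < \<infinity>"
proof -
  have "(\<integral>\<^sup>+ks. ennreal (Pr q t ks) \<partial>count_space (DP (length t)))
      \<le> (\<integral>\<^sup>+ks. ennreal (q ^ hd ks) \<partial>count_space (DP (length t)))"
  proof (intro nn_mono_le ennreal_leI)
    fix ks assume ks: "ks \<in> DP (length t)"
    have ne: "ks \<noteq> []" using ks t unfolding DP_def by auto
    have "Pr q t ks \<le> q ^ (ks ! 0)"
      by (rule Pr_le[OF q0 q1]) (use t ks in \<open>auto simp: DP_def hd_conv_nth\<close>)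
    then show "Pr q t ks \<le> q ^ hd ks" using ne by (simp add: hd_conv_nth)
  qed
  also have "\<dots> \<le> (\<integral>\<^sup>+ks. ennreal (q ^ hd ks) \<partial>count_space {ks::nat list. length ks = length t \<and> sorted_wrt (>) ks})"
    by (rule nn_subset_le) (auto simp: DP_def)
  also have "\<dots> < \<infinity>" using list_fin[OF q0 q1] t by simp
  finally show ?thesis .
qed

lemma T_fin:
  assumes q0: "0 < q" and q1: "q < (1::real)" and j0: "j0 < length s" "2 \<le> s ! j0"
  shows "(\<integral>\<^sup>+ks. ennreal (gq q (hd ks - last ks) * Pr q s ks)
            \<partial>count_space {ks. length ks = length s + 1 \<and> sorted_wrt (>) ks}) < \<infinity>"
proof -
  have "(\<integral>\<^sup>+ks. ennreal (gq q (hd ks - last ks) * Pr q s ks)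
            \<partial>count_space {ks. length ks = length s + 1 \<and> sorted_wrt (>) ks})
      \<le> (\<integral>\<^sup>+ks. ennreal (q ^ hd ks) \<partial>count_space {ks::nat list. length ks = length s + 1 \<and> sorted_wrt (>) ks})"
  proof (intro nn_mono_le ennreal_leI)
    fix ks :: "nat list" assume ks: "ks \<in> {ks. length ks = length s + 1 \<and> sorted_wrt (>) ks}"
    have ne: "ks \<noteq> []" using ks by auto
    have so: "sorted_wrt (>) ks" using ks by auto
    have last: "last ks = ks ! length s" using ks ne by (simp add: last_conv_nth)
    have gt: "ks ! length s < ks ! j" if "j < length s" for j
      using sorted_wrt_nth_less[OF so that] ks by auto
    have pos: "0 < ks ! j" if "j < length s" for j using gt[OF that] by simp
    have P1: "Pr q s ks \<le> q ^ (ks ! j0)" by (rule Pr_le[OF q0 q1 j0 pos])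
    have "q ^ (ks ! j0) \<le> q ^ last ks" unfolding last using gt[OF j0(1)] q0 q1
      by (intro power_decreasing) auto
    with P1 have P2: "Pr q s ks \<le> q ^ last ks" by linarith
    have hl: "last ks \<le> hd ks" using sorted_hd[OF so, of "last ks"] ne by simp
    have G: "gq q (hd ks - last ks) \<le> q ^ (hd ks - last ks)" using gq_le[OF q0 q1] .
    have "gq q (hd ks - last ks) * Pr q s ks \<le> q ^ (hd ks - last ks) * q ^ last ks"
      using G P2 gq_nonneg[OF q0 q1] Pr_nonneg[OF q0 q1] q0 by (intro mult_mono) auto
    also have "\<dots> = q ^ hd ks" using hl by (simp flip: power_add)
    finally show "gq q (hd ks - last ks) * Pr q s ks \<le> q ^ hd ks" .
  qed
  also have "\<dots> < \<infinity>" using list_fin[OF q0 q1] by simp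
  finally show ?thesis .
qed



lemma qzeta_nn:
  assumes q0: "0 < q" and q1: "q < (1::real)"
  shows "qzeta q t = enn2real (\<integral>\<^sup>+ks. ennreal (Pr q t ks) \<partial>count_space (DP (length t)))"
proof -
  have "qzeta q t = infsum (\<lambda>ks. Pr q t ks) (DP (length t))"
    by (simp add: qzeta_def Pr_def fq_def DP_def)
  also have "\<dots> = enn2real (\<integral>\<^sup>+ks. ennreal (Pr q t ks) \<partial>count_space (DP (length t)))"
    by (rule infsum_conv_nn) (use Pr_nonneg[OF q0 q1] in auto)
  finally show ?thesis .
qed

lemma qT_nn:
  assumes q0: "0 < q" and q1: "q < (1::real)"
  shows "qT q s = enn2real (\<integral>\<^sup>+ks. ennreal (gq q (hd ks - last ks) * Pr q s ks)
            \<partial>count_space {ks. length ks = length s + 1 \<and> sorted_wrt (>) ks})"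
proof -
  have "qT q s = infsum (\<lambda>ks. gq q (hd ks - last ks) * Pr q s ks) {ks. length ks = length s + 1 \<and> sorted_wrt (>) ks}"
    by (simp add: qT_def Pr_def fq_def gq_def)
  also have "\<dots> = enn2real (\<integral>\<^sup>+ks. ennreal (gq q (hd ks - last ks) * Pr q s ks)
            \<partial>count_space {ks. length ks = length s + 1 \<and> sorted_wrt (>) ks})"
    by (rule infsum_conv_nn) (use Pr_nonneg[OF q0 q1] gq_nonneg[OF q0 q1] in auto)
  finally show ?thesis .
qed

lemma Pr_prefix: "length ks = length t \<Longrightarrow> Pr q t (ks @ ks') = Pr q t ks"
  using Pr_append[of ks t q "[]" ks'] by simp

context
  fixes q :: real
  assumes q0: "0 < q" and q1: "q < 1"
begin

lemma nnP: "0 \<le> Pr q t ks" using Pr_nonneg[OF q0 q1] .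
lemma nnF: "0 \<le> fq q a b" using fq_nonneg[OF q0 q1] .
lemma nnG: "0 \<le> gq q a" using gq_nonneg[OF q0 q1] .

lemma decT1:
  assumes ss: "ss \<noteq> []"
  shows "(\<integral>\<^sup>+ks. ennreal (gq q (hd ks - last ks) * Pr q (s1 # ss) ks)
            \<partial>count_space {ks. length ks = length (s1 # ss) + 1 \<and> sorted_wrt (>) ks})
    = (\<integral>\<^sup>+mid. ennreal (Pr q ss mid) *
         (\<integral>\<^sup>+k. (\<Sum>p<last mid. ennreal (fq q s1 k * gq q (k-p))) \<partial>count_space {hd mid<..})
       \<partial>count_space (DP (length ss)))"
proof -
  have m: "0 < length ss" using ss by simp
  have S: "{ks. length ks = length (s1 # ss) + 1 \<and> sorted_wrt (>) ks}
     = {ks::nat list. length ks = Suc (Suc (length ss)) \<and> sorted_wrt (>) ks \<and> (\<forall>x\<in>set ks. 0 \<le> x)}" by auto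
  show ?thesis unfolding S dec_KMP[OF m]
  proof (intro nn_integral_cong)
    fix mid assume "mid \<in> space (count_space (DP (length ss)))"
    then have len: "length mid = length ss" by (simp add: DP_def)
    have e: "ennreal (gq q (hd (k # mid @ [p]) - last (k # mid @ [p])) * Pr q (s1 # ss) (k # mid @ [p]))
        = ennreal (Pr q ss mid) * ennreal (fq q s1 k * gq q (k-p))" for k p
    proof -
      have "gq q (hd (k # mid @ [p]) - last (k # mid @ [p])) * Pr q (s1 # ss) (k # mid @ [p])
          = Pr q ss mid * (fq q s1 k * gq q (k-p))" using len by (simp add: Pr_prefix mult_ac)
      then show ?thesis by (simp only: ennreal_mult[OF nnP mult_nonneg_nonneg[OF nnF nnG]])
    qed
    show "(\<integral>\<^sup>+k. \<integral>\<^sup>+p. ennreal (gq q (hd (k # mid @ [p]) - last (k # mid @ [p])) * Pr q (s1 # ss) (k # mid @ [p]))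
              \<partial>count_space {0..<last mid} \<partial>count_space {hd mid<..})
        = ennreal (Pr q ss mid) * (\<integral>\<^sup>+k. (\<Sum>p<last mid. ennreal (fq q s1 k * gq q (k-p))) \<partial>count_space {hd mid<..})"
      unfolding e
      by (simp add: nn_integral_count_space_finite atLeast0LessThan nn_integral_cmult
          flip: sum_distrib_left del: sum_ennreal)
  qed
qed


lemma decT2:
  assumes ss: "ss \<noteq> []"
  shows "(\<integral>\<^sup>+ks. ennreal (gq q (hd ks - last ks) * Pr q (ss @ [s1]) ks)
            \<partial>count_space {ks. length ks = length (ss @ [s1]) + 1 \<and> sorted_wrt (>) ks})
    = (\<integral>\<^sup>+mid. ennreal (Pr q ss mid) *
         (\<Sum>a<last mid. \<Sum>p<a. ennreal (fq q s1 a * gq q (hd mid - p)))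
       \<partial>count_space (DP (length ss)))"
proof -
  have m: "0 < length ss" using ss by simp
  have S: "length (ss @ [s1]) + 1 = Suc (Suc (length ss))" by simp
  show ?thesis unfolding S dec_MKP[OF m]
  proof (intro nn_integral_cong)
    fix mid assume "mid \<in> space (count_space (DP (length ss)))"
    then have len: "length mid = length ss" by (simp add: DP_def)
    then have ne: "mid \<noteq> []" using ss by auto
    have e: "ennreal (gq q (hd (mid @ [a, p]) - last (mid @ [a, p])) * Pr q (ss @ [s1]) (mid @ [a, p]))
        = ennreal (Pr q ss mid) * ennreal (fq q s1 a * gq q (hd mid - p))" for a p
    proof -
      have "gq q (hd (mid @ [a, p]) - last (mid @ [a, p])) * Pr q (ss @ [s1]) (mid @ [a, p])
          = Pr q ss mid * (fq q s1 a * gq q (hd mid - p))" using len ne by (simp add: Pr_append mult_ac)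
      then show ?thesis by (simp only: ennreal_mult[OF nnP mult_nonneg_nonneg[OF nnF nnG]])
    qed
    show "(\<integral>\<^sup>+a. \<integral>\<^sup>+p. ennreal (gq q (hd (mid @ [a, p]) - last (mid @ [a, p])) * Pr q (ss @ [s1]) (mid @ [a, p]))
              \<partial>count_space {..<a} \<partial>count_space {..<last mid})
        = ennreal (Pr q ss mid) * (\<Sum>a<last mid. \<Sum>p<a. ennreal (fq q s1 a * gq q (hd mid - p)))"
      unfolding e
      by (simp add: nn_integral_count_space_finite flip: sum_distrib_left del: sum_ennreal)
  qed
qed

lemma decZ0:
  assumes ss: "ss \<noteq> []"
  shows "(\<integral>\<^sup>+ks. ennreal (Pr q ((s1 + 1) # ss) ks) \<partial>count_space (DP (length ((s1 + 1) # ss))))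
    = (\<integral>\<^sup>+mid. ennreal (Pr q ss mid) *
         (\<integral>\<^sup>+k. ennreal (fq q (Suc s1) k) \<partial>count_space {hd mid<..})
       \<partial>count_space (DP (length ss)))"
proof -
  have m: "0 < length ss" using ss by simp
  have S: "length ((s1 + 1) # ss) = Suc (length ss)" by simp
  show ?thesis unfolding S dec_KM[OF m]
  proof (intro nn_integral_cong)
    fix mid
    have e: "ennreal (Pr q ((s1 + 1) # ss) (k # mid)) = ennreal (Pr q ss mid) * ennreal (fq q (Suc s1) k)" for k
    proof -
      have "Pr q ((s1 + 1) # ss) (k # mid) = Pr q ss mid * fq q (Suc s1) k" by simp
      then show ?thesis by (simp only: ennreal_mult[OF nnP nnF])
    qed
    show "(\<integral>\<^sup>+k. ennreal (Pr q ((s1 + 1) # ss) (k # mid)) \<partial>count_space {hd mid<..})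
        = ennreal (Pr q ss mid) * (\<integral>\<^sup>+k. ennreal (fq q (Suc s1) k) \<partial>count_space {hd mid<..})"
      unfolding e by (simp add: nn_integral_cmult)
  qed
qed

lemma decZj:
  assumes ss: "ss \<noteq> []"
  shows "(\<integral>\<^sup>+ks. ennreal (Pr q (a # ss @ [b]) ks) \<partial>count_space (DP (length (a # ss @ [b]))))
    = (\<integral>\<^sup>+mid. ennreal (Pr q ss mid) *
         ((\<integral>\<^sup>+k. ennreal (fq q a k) \<partial>count_space {hd mid<..}) * (\<Sum>p\<in>{0<..<last mid}. ennreal (fq q b p)))
       \<partial>count_space (DP (length ss)))"
proof -
  have m: "0 < length ss" using ss by simp
  have S: "DP (length (a # ss @ [b])) = {ks. length ks = Suc (Suc (length ss)) \<and> sorted_wrt (>) ks \<and> (\<forall>x\<in>set ks. 1 \<le> x)}"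
    unfolding DP_def by (auto simp: Suc_le_eq)
  show ?thesis unfolding S dec_KMP[OF m]
  proof (intro nn_integral_cong)
    fix mid assume "mid \<in> space (count_space (DP (length ss)))"
    then have len: "length mid = length ss" by (simp add: DP_def)
    have e: "ennreal (Pr q (a # ss @ [b]) (k # mid @ [p])) = ennreal (Pr q ss mid) * (ennreal (fq q a k) * ennreal (fq q b p))" for k p
    proof -
      have "Pr q (a # ss @ [b]) (k # mid @ [p]) = Pr q ss mid * (fq q a k * fq q b p)"
        using len by (simp add: Pr_append mult_ac)
      then show ?thesis by (simp only: ennreal_mult[OF nnP mult_nonneg_nonneg[OF nnF nnF]] ennreal_mult[OF nnF nnF])
    qed
    have i1: "(\<integral>\<^sup>+p. ennreal (Pr q ss mid) * (ennreal (fq q a k) * ennreal (fq q b p)) \<partial>count_space {1..<last mid})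
       = ennreal (Pr q ss mid) * ennreal (fq q a k) * (\<Sum>p\<in>{0<..<last mid}. ennreal (fq q b p))" for k
    proof -
      have "{1..<last mid} = {0<..<last mid}" by auto
      then show ?thesis by (simp add: nn_integral_count_space_finite sum_distrib_left mult.assoc del: sum_ennreal)
    qed
    show "(\<integral>\<^sup>+k. \<integral>\<^sup>+p. ennreal (Pr q (a # ss @ [b]) (k # mid @ [p])) \<partial>count_space {1..<last mid} \<partial>count_space {hd mid<..})
        = ennreal (Pr q ss mid) * ((\<integral>\<^sup>+k. ennreal (fq q a k) \<partial>count_space {hd mid<..}) * (\<Sum>p\<in>{0<..<last mid}. ennreal (fq q b p)))"
      unfolding e i1 by (simp add: nn_integral_multc nn_integral_cmult mult.assoc del: sum_ennreal)
  qed
qed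

end


lemma key_ne:
  assumes q0: "0 < q" and q1: "q < (1::real)" and ss: "ss \<noteq> []" and s1: "0 < s1"
  shows "(\<integral>\<^sup>+ks. ennreal (gq q (hd ks - last ks) * Pr q (s1 # ss) ks)
            \<partial>count_space {ks. length ks = length (s1 # ss) + 1 \<and> sorted_wrt (>) ks})
    + (\<Sum>j<s1-1. \<integral>\<^sup>+ks. ennreal (Pr q ((s1 - j) # ss @ [j + 1]) ks) \<partial>count_space (DP (length ((s1 - j) # ss @ [j + 1]))))
    = (\<integral>\<^sup>+ks. ennreal (Pr q ((s1 + 1) # ss) ks) \<partial>count_space (DP (length ((s1 + 1) # ss))))
    + (\<integral>\<^sup>+ks. ennreal (gq q (hd ks - last ks) * Pr q (ss @ [s1]) ks)
            \<partial>count_space {ks. length ks = length (ss @ [s1]) + 1 \<and> sorted_wrt (>) ks})"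
  unfolding decT1[OF q0 q1 ss] decT2[OF q0 q1 ss] decZ0[OF q0 q1 ss] decZj[OF q0 q1 ss]
proof -
  let ?P = "\<lambda>mid. ennreal (Pr q ss mid)"
  let ?A = "\<lambda>mid. (\<integral>\<^sup>+k. (\<Sum>p<last mid. ennreal (fq q s1 k * gq q (k-p))) \<partial>count_space {hd mid<..})"
  let ?C = "\<lambda>j mid. (\<integral>\<^sup>+k. ennreal (fq q (s1 - j) k) \<partial>count_space {hd mid<..}) * (\<Sum>p\<in>{0<..<last mid}. ennreal (fq q (j + 1) p))"
  let ?E = "\<lambda>mid. (\<integral>\<^sup>+k. ennreal (fq q (Suc s1) k) \<partial>count_space {hd mid<..})"
  let ?B = "\<lambda>mid. (\<Sum>a<last mid. \<Sum>p<a. ennreal (fq q s1 a * gq q (hd mid - p)))"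
  have "(\<integral>\<^sup>+mid. ?P mid * ?A mid \<partial>count_space (DP (length ss)))
      + (\<Sum>j<s1-1. \<integral>\<^sup>+mid. ?P mid * ?C j mid \<partial>count_space (DP (length ss)))
      = (\<integral>\<^sup>+mid. ?P mid * ?A mid + (\<Sum>j<s1-1. ?P mid * ?C j mid) \<partial>count_space (DP (length ss)))"
    by (simp add: nn_integral_add nn_integral_sum del: sum_ennreal)
  also have "\<dots> = (\<integral>\<^sup>+mid. ?P mid * ?E mid + ?P mid * ?B mid \<partial>count_space (DP (length ss)))"
  proof (rule nn_integral_cong)
    fix mid assume "mid \<in> space (count_space (DP (length ss)))"
    then have mid: "mid \<in> DP (length ss)" by simp
    then have ne: "mid \<noteq> []" and so: "sorted_wrt (>) mid" and pos: "\<forall>x\<in>set mid. 0 < x"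
      using ss unfolding DP_def by auto
    have l1: "1 \<le> last mid" using pos ne by (simp add: Suc_le_eq)
    have lL: "last mid \<le> hd mid" using sorted_hd[OF so, of "last mid"] ne by simp
    have st: "?A mid + (\<Sum>j<s1-1. ?C j mid) = ?E mid + ?B mid"
      using star[OF q0 q1 s1 l1 lL] by simp
    show "?P mid * ?A mid + (\<Sum>j<s1-1. ?P mid * ?C j mid) = ?P mid * ?E mid + ?P mid * ?B mid"
    proof -
      have "?P mid * ?A mid + (\<Sum>j<s1-1. ?P mid * ?C j mid) = ?P mid * (?A mid + (\<Sum>j<s1-1. ?C j mid))"
        by (simp only: distrib_left sum_distrib_left)
      also have "\<dots> = ?P mid * (?E mid + ?B mid)" by (simp only: st)
      also have "\<dots> = ?P mid * ?E mid + ?P mid * ?B mid" by (simp only: distrib_left)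
      finally show ?thesis .
    qed
  qed
  also have "\<dots> = (\<integral>\<^sup>+mid. ?P mid * ?E mid \<partial>count_space (DP (length ss))) + (\<integral>\<^sup>+mid. ?P mid * ?B mid \<partial>count_space (DP (length ss)))"
    by (simp add: nn_integral_add)
  finally show "(\<integral>\<^sup>+mid. ?P mid * ?A mid \<partial>count_space (DP (length ss)))
      + (\<Sum>j<s1-1. \<integral>\<^sup>+mid. ?P mid * ?C j mid \<partial>count_space (DP (length ss)))
      = (\<integral>\<^sup>+mid. ?P mid * ?E mid \<partial>count_space (DP (length ss))) + (\<integral>\<^sup>+mid. ?P mid * ?B mid \<partial>count_space (DP (length ss)))" .
qed


theorem theorem5p5:
  fixes q :: real and s1 :: nat and ss :: "nat list"
  assumes "0 < q" and "q < 1"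
    and "0 < s1" and "\<forall>x\<in>set ss. 0 < x"
    and "\<exists>x\<in>set (s1 # ss). 1 < x"
  shows "qT q (s1 # ss) - qT q (ss @ [s1]) =
         qzeta q ((s1 + 1) # ss) - (\<Sum>k = 0..<s1 - 1. qzeta q ((s1 - k) # ss @ [k + 1]))"
proof -
  have q0: "0 < q" and q1: "q < 1" and s1: "0 < s1" using assms by auto
  have nnF: "\<And>a b. 0 \<le> fq q a b" using fq_nonneg[OF q0 q1] .
  have Zfin: "(\<integral>\<^sup>+ks. ennreal (Pr q ((s1 - j) # ss @ [j + 1]) ks) \<partial>count_space (DP (length ((s1 - j) # ss @ [j + 1])))) < \<infinity>"
    if "j < s1 - 1" for j
    by (rule zeta_fin[OF q0 q1]) (use that in auto)
  have sumR: "(\<Sum>k = 0..<s1 - 1. qzeta q ((s1 - k) # ss @ [k + 1]))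
      = enn2real (\<Sum>j<s1-1. \<integral>\<^sup>+ks. ennreal (Pr q ((s1 - j) # ss @ [j + 1]) ks) \<partial>count_space (DP (length ((s1 - j) # ss @ [j + 1]))))"
    by (subst enn2real_sum) (use Zfin in \<open>auto simp: qzeta_nn[OF q0 q1] atLeast0LessThan\<close>)
  show ?thesis
  proof (cases "ss = []")
    case True
    then have s2: "2 \<le> s1" using assms(5) by auto
    have Z: "(\<integral>\<^sup>+ks. ennreal (Pr q [s1 + 1] ks) \<partial>count_space (DP 1)) = (\<integral>\<^sup>+k. ennreal (fq q (Suc s1) k) \<partial>count_space {0<..})"
      by (subst dec_1) simp
    have W: "(\<integral>\<^sup>+ks. ennreal (Pr q [s1 - j, j + 1] ks) \<partial>count_space (DP 2))
       = (\<integral>\<^sup>+p. \<integral>\<^sup>+k. ennreal (fq q (s1 - j) k * fq q (j + 1) p) \<partial>count_space {p<..} \<partial>count_space {0<..})" for j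
      by (simp add: dec_2)
    have "(\<integral>\<^sup>+ks. ennreal (Pr q [s1 + 1] ks) \<partial>count_space (DP 1))
        = (\<Sum>j<s1-1. \<integral>\<^sup>+ks. ennreal (Pr q [s1 - j, j + 1] ks) \<partial>count_space (DP 2))"
      unfolding Z W using sumformula[OF q0 q1 s2] by simp
    then have "qzeta q ((s1 + 1) # ss) = (\<Sum>k = 0..<s1 - 1. qzeta q ((s1 - k) # ss @ [k + 1]))"
      unfolding sumR using True by (simp add: qzeta_nn[OF q0 q1] numeral_2_eq_2)
    then show ?thesis using True by simp
  next
    case False
    define T1 where "T1 = (\<integral>\<^sup>+ks. ennreal (gq q (hd ks - last ks) * Pr q (s1 # ss) ks)
            \<partial>count_space {ks. length ks = length (s1 # ss) + 1 \<and> sorted_wrt (>) ks})"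
    define T2 where "T2 = (\<integral>\<^sup>+ks. ennreal (gq q (hd ks - last ks) * Pr q (ss @ [s1]) ks)
            \<partial>count_space {ks. length ks = length (ss @ [s1]) + 1 \<and> sorted_wrt (>) ks})"
    define Z0 where "Z0 = (\<integral>\<^sup>+ks. ennreal (Pr q ((s1 + 1) # ss) ks) \<partial>count_space (DP (length ((s1 + 1) # ss))))"
    define ZS where "ZS = (\<Sum>j<s1-1. \<integral>\<^sup>+ks. ennreal (Pr q ((s1 - j) # ss @ [j + 1]) ks) \<partial>count_space (DP (length ((s1 - j) # ss @ [j + 1]))))"
    have key: "T1 + ZS = Z0 + T2" unfolding T1_def T2_def Z0_def ZS_def by (rule key_ne[OF q0 q1 False s1])
    obtain x where x: "x \<in> set (s1 # ss)" "1 < x" using assms(5) by blast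
    obtain i where i: "i < length (s1 # ss)" "(s1 # ss) ! i = x" using x(1) unfolding in_set_conv_nth by blast
    have "x \<in> set (ss @ [s1])" using x(1) by auto
    then obtain i' where i': "i' < length (ss @ [s1])" "(ss @ [s1]) ! i' = x" unfolding in_set_conv_nth by blast
    have T1fin: "T1 < \<infinity>" unfolding T1_def by (rule T_fin[OF q0 q1 i(1)]) (use i x in auto)
    have T2fin: "T2 < \<infinity>" unfolding T2_def by (rule T_fin[OF q0 q1 i'(1)]) (use i' x in auto)
    have Z0fin: "Z0 < \<infinity>" unfolding Z0_def by (rule zeta_fin[OF q0 q1]) (use s1 in auto)
    have ZSfin: "ZS < \<infinity>" unfolding ZS_def using Zfin by (simp add: ennreal_sum_less_top)
    have "enn2real (T1 + ZS) = enn2real (Z0 + T2)" using key by simp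
    then have "enn2real T1 + enn2real ZS = enn2real Z0 + enn2real T2"
      using T1fin T2fin Z0fin ZSfin by (simp add: enn2real_plus)
    moreover have "qT q (s1 # ss) = enn2real T1" unfolding T1_def by (rule qT_nn[OF q0 q1])
    moreover have "qT q (ss @ [s1]) = enn2real T2" unfolding T2_def by (rule qT_nn[OF q0 q1])
    moreover have "qzeta q ((s1 + 1) # ss) = enn2real Z0" unfolding Z0_def by (rule qzeta_nn[OF q0 q1])
    moreover have "(\<Sum>k = 0..<s1 - 1. qzeta q ((s1 - k) # ss @ [k + 1])) = enn2real ZS"
      unfolding ZS_def by (rule sumR)
    ultimately show ?thesis by linarith
  qed
qed


end
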